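(* There exists a map $C$ which assigns to every ZX-diagram $D:n\to m$ (for all $n,m\in\mathbb N$) a ZX-diagram $C(D):1\to n+m$ such that, for every ZX-diagram $D:n\to m$: (i) $C(D)$ is a controlled state, and (ii) $\llbracket C(D)\rrbracket\,|1\rangle=\lambda_{n,m}\,\mathrm{vec}(\llbracket D\rrbracket)$, where $\lambda_{n,m}\neq 0$ is a complex scalar depending only on $n$ and $m$ (not on $D$). Moreover $C$ can be chosen compositional: $C(D)$ is defined by induction on the structure of $D$, with $C(D_2\otimes D_1)$ built only from $C(D_1)$ and $C(D_2)$, and $C(D_3\circ D_1)$ built only from $C(D_1)$ and $C(D_3)$, together with fixed constant diagrams.
   Context: ZX-diagrams $D:n\to m$ are built from the generators: green spiders $Z^{\alpha}_{n,m}$ and red spiders $X^{\alpha}_{n,m}$ ($n$ inputs, $m$ outputs, angle $\alpha\in\mathbb R/2\pi\mathbb Z$), the Hadamard $H:1\to1$, identity $1\to 1$, swap $2\to2$, cup $2\to0$, cap $0\to2$ and the empty diagram $0\to0$, closed under sequential composition $\circ$ and tensor product $\otimes$. The standard interpretation $\llbracket D\rrbracket\in\mathcal M_{2^m,2^n}(\mathbb C)$ is the functor with $\llbracket Z^\alpha_{n,m}\rrbracket=|0\rangle^{\otimes m}\langle0|^{\otimes n}+e^{i\alpha}|1\rangle^{\otimes m}\langle1|^{\otimes n}$, $\llbracket X^\alpha_{n,m}\rrbracket=|+\rangle^{\otimes m}\langle+|^{\otimes n}+e^{i\alpha}|-\rangle^{\otimes m}\langle-|^{\otimes n}$, $\llbracket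 H\rrbracket=|+\rangle\langle0|+|-\rangle\langle1|$, cup $\mapsto\langle00|+\langle11|$, cap $\mapsto|00\rangle+|11\rangle$, swap $\mapsto\sum_{i,j}|ij\rangle\langle ji|$, identity and empty diagram mapped to the identity and to $1$, with $\llbracket D_1\circ D_0\rrbracket=\llbracket D_1\rrbracket\llbracket D_0\rrbracket$ and $\llbracket D_0\otimes D_2\rrbracket=\llbracket D_0\rrbracket\otimes\llbracket D_2\rrbracket$; here $|\pm\rangle=(|0\rangle\pm|1\rangle)/\sqrt2$. A ZX-diagram $D:1\to k$ is a controlled state if $\llbracket D\rrbracket|0\rangle=\sum_{x\in\{0,1\}^k}|x\rangle$. For a linear map $M:\mathbb C^{2^n}\to\mathbb C^{2^m}$ let $\mathrm{vec}(M)=\sum_{x\in\{0,1\}^n}|x\rangle\otimes M|x\rangle\in\mathbb C^{2^{n+m}}$ (so $M$ is recovered from $\mathrm{vec}(M)$ by bending the first $n$ wires into inputs with cups). A map $C$ satisfying (i) and (ii) is called a controlizer. *)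

theory Defs
  imports Complex_Main
begin

text \<open>Comp D1 D0 is the sequential composition D1 after D0;
  Tens D0 D2 is the tensor product (D0 on the first wires).
  Angles are real numbers; the semantics only depends on them modulo 2 pi.\<close>

datatype zx =
    ZS nat nat real
  | XS nat nat real
  | Had | Wire | Swap | Cup | Cap | Emp
  | Comp zx zx
  | Tens zx zx

fun ins :: "zx \<Rightarrow> nat" where
  "ins (ZS n m a) = n"
| "ins (XS n m a) = n"
| "ins Had = 1"
| "ins Wire = 1"
| "ins Swap = 2"
| "ins Cup = 2"
| "ins Cap = 0"
| "ins Emp = 0"
| "ins (Comp D1 D0) = ins D0"
| "ins (Tens D0 D2) = ins D0 + ins D2"

fun outs :: "zx \<Rightarrow> nat" where
  "outs (ZS n m a) = m"
| "outs (XS n m a) = m"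
| "outs Had = 1"
| "outs Wire = 1"
| "outs Swap = 2"
| "outs Cup = 0"
| "outs Cap = 2"
| "outs Emp = 0"
| "outs (Comp D1 D0) = outs D1"
| "outs (Tens D0 D2) = outs D0 + outs D2"

fun wf :: "zx \<Rightarrow> bool" where
  "wf (Comp D1 D0) = (wf D1 \<and> wf D0 \<and> outs D0 = ins D1)"
| "wf (Tens D0 D2) = (wf D0 \<and> wf D2)"
| "wf _ = True"

definition bits :: "nat \<Rightarrow> bool list set" where
  "bits k = {x. length x = k}"

definition nones :: "bool list \<Rightarrow> nat" where
  "nones x = length (filter id x)"

text \<open>Standard interpretation, given by matrix entries: sem D y x = <y| [[D]] |x>,
  where a basis vector |x> of (C^2)^{\<otimes>k} is indexed by a bit list x of length k
  (first list element = first tensor factor).\<close>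
fun sem :: "zx \<Rightarrow> bool list \<Rightarrow> bool list \<Rightarrow> complex" where
  "sem (ZS n m a) y x =
     (if (\<forall>b\<in>set y. \<not> b) \<and> (\<forall>b\<in>set x. \<not> b) then 1 else 0)
   + (if (\<forall>b\<in>set y. b) \<and> (\<forall>b\<in>set x. b) then exp (\<i> * complex_of_real a) else 0)"
| "sem (XS n m a) y x =
     complex_of_real ((1 / sqrt 2) ^ (n + m)) *
       (1 + exp (\<i> * complex_of_real a) * (-1) ^ (nones y + nones x))"
| "sem Had y x = (if y = [True] \<and> x = [True] then - complex_of_real (1 / sqrt 2)
                  else complex_of_real (1 / sqrt 2))"
| "sem Wire y x = (if y = x then 1 else 0)"
| "sem Swap y x = (if y = rev x then 1 else 0)"
| "sem Cup y x = (if y = [] \<and> (x = [False, False] \<or> x = [True, True]) then 1 else 0)"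
| "sem Cap y x = (if x = [] \<and> (y = [False, False] \<or> y = [True, True]) then 1 else 0)"
| "sem Emp y x = (if y = [] \<and> x = [] then 1 else 0)"
| "sem (Comp D1 D0) y x = (\<Sum>z\<in>bits (outs D0). sem D1 y z * sem D0 z x)"
| "sem (Tens D0 D2) y x =
     sem D0 (take (outs D0) y) (take (ins D0) x) * sem D2 (drop (outs D0) y) (drop (ins D0) x)"

definition controlled_state :: "zx \<Rightarrow> bool" where
  "controlled_state D \<longleftrightarrow> wf D \<and> ins D = 1 \<and>
     (\<forall>y. length y = outs D \<longrightarrow> sem D y [False] = 1)"

fun wires :: "nat \<Rightarrow> zx" where
  "wires 0 = Emp"
| "wires (Suc r) = Tens Wire (wires r)"

end

theory Submission
  imports Defs
begin



lemma bits_0[simp]: "bits 0 = {[]}" by (auto simp: bits_def)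
lemma bits_Suc: "bits (Suc n) = Cons False ` bits n \<union> Cons True ` bits n"
  by (auto simp: bits_def image_iff length_Suc_conv)
lemma finite_bits[simp]: "finite (bits n)"
  by (induction n) (auto simp: bits_Suc)
lemma mem_bits[simp]: "x \<in> bits n \<longleftrightarrow> length x = n" by (simp add: bits_def)
lemma card_bits: "card (bits n) = 2 ^ n"
proof (induction n)
  case (Suc n)
  have "card (bits (Suc n)) = card (Cons False ` bits n) + card (Cons True ` bits n)"
    unfolding bits_Suc by (rule card_Un_disjoint) auto
  also have "\<dots> = 2 * card (bits n)" by (simp add: card_image)
  finally show ?case using Suc by simp
qed simp

lemma sum_bits_Suc: "(\<Sum>z\<in>bits (Suc n). f z) = (\<Sum>z\<in>bits n. f (False#z)) + (\<Sum>z\<in>bits n. f (True#z))"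
  unfolding bits_Suc by (subst sum.union_disjoint) (auto simp: sum.reindex)

lemma sum_bits_1: "(\<Sum>z\<in>bits (Suc 0). f z) = f [False] + f [True]"
  by (simp add: sum_bits_Suc)

lemma sum_bits_add: "(\<Sum>z\<in>bits (a+b). f z) = (\<Sum>u\<in>bits a. \<Sum>v\<in>bits b. f (u@v))"
proof (induction a arbitrary: f)
  case 0 then show ?case by simp
next
  case (Suc a)
  have "(\<Sum>z\<in>bits (Suc a + b). f z) = (\<Sum>z\<in>bits (a+b). f (False#z)) + (\<Sum>z\<in>bits (a+b). f (True#z))"
    by (simp add: sum_bits_Suc)
  also have "\<dots> = (\<Sum>u\<in>bits (Suc a). \<Sum>v\<in>bits b. f (u@v))"
    by (simp add: Suc sum_bits_Suc)
  finally show ?case .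
qed

lemma split_len: "length x = a + b \<Longrightarrow> \<exists>x1 x2. x = x1 @ x2 \<and> length x1 = a \<and> length x2 = b"
  by (rule exI[of _ "take a x"], rule exI[of _ "drop a x"]) simp

lemma sem_Tens_app: "length y1 = outs A \<Longrightarrow> length x1 = ins A \<Longrightarrow>
   sem (Tens A B) (y1@y2) (x1@x2) = sem A y1 x1 * sem B y2 x2"
  by simp




definition isperm :: "zx \<Rightarrow> (bool list \<Rightarrow> bool list) \<Rightarrow> bool" where
 "isperm P g \<longleftrightarrow> wf P \<and> (\<forall>x. length x = ins P \<longrightarrow> length (g x) = outs P) \<and>
   (\<forall>x y. length x = ins P \<longrightarrow> length y = outs P \<longrightarrow> sem P y x = (if y = g x then 1 else 0))"

lemma isperm_cong: "isperm P g \<Longrightarrow> (\<And>x. length x = ins P \<Longrightarrow> g x = g' x) \<Longrightarrow> isperm P g'"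
  unfolding isperm_def by metis

lemma isperm_Wire: "isperm Wire id"
  by (auto simp: isperm_def)

lemma isperm_Emp: "isperm Emp id"
  by (auto simp: isperm_def)

lemma isperm_Swap: "isperm Swap rev"
  by (auto simp: isperm_def)

lemma isperm_Tens:
  assumes A: "isperm A f" and B: "isperm B g"
  shows "isperm (Tens A B) (\<lambda>x. f (take (ins A) x) @ g (drop (ins A) x))"
proof -
  have fl: "\<And>x. length x = ins A \<Longrightarrow> length (f x) = outs A" using A by (simp add: isperm_def)
  have gl: "\<And>x. length x = ins B \<Longrightarrow> length (g x) = outs B" using B by (simp add: isperm_def)
  have fs: "\<And>x y. length x = ins A \<Longrightarrow> length y = outs A \<Longrightarrow> sem A y x = (if y = f x then 1 else 0)"
    using A by (simp add: isperm_def)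
  have gs: "\<And>x y. length x = ins B \<Longrightarrow> length y = outs B \<Longrightarrow> sem B y x = (if y = g x then 1 else 0)"
    using B by (simp add: isperm_def)
  show ?thesis unfolding isperm_def
  proof (intro conjI allI impI)
    show "wf (Tens A B)" using A B by (simp add: isperm_def)
    fix x :: "bool list" assume "length x = ins (Tens A B)"
    then show "length (f (take (ins A) x) @ g (drop (ins A) x)) = outs (Tens A B)"
      by (simp add: fl gl)
  next
    fix x y :: "bool list" assume x: "length x = ins (Tens A B)" and y: "length y = outs (Tens A B)"
    have e: "(y = f (take (ins A) x) @ g (drop (ins A) x)) \<longleftrightarrow>
        (take (outs A) y = f (take (ins A) x) \<and> drop (outs A) y = g (drop (ins A) x))"
    proof
      assume "y = f (take (ins A) x) @ g (drop (ins A) x)"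
      then show "take (outs A) y = f (take (ins A) x) \<and> drop (outs A) y = g (drop (ins A) x)"
        using x by (simp add: fl)
    next
      assume "take (outs A) y = f (take (ins A) x) \<and> drop (outs A) y = g (drop (ins A) x)"
      then show "y = f (take (ins A) x) @ g (drop (ins A) x)"
        by (metis append_take_drop_id)
    qed
    show "sem (Tens A B) y x = (if y = f (take (ins A) x) @ g (drop (ins A) x) then 1 else 0)"
      using x y by (simp add: fs gs e)
  qed
qed

lemma comp_perm_right:
  assumes B: "isperm B g" and "length x = ins B"
  shows "sem (Comp A B) y x = sem A y (g x)"
proof -
  have "sem (Comp A B) y x = (\<Sum>z\<in>bits (outs B). sem A y z * sem B z x)" by simp
  also have "\<dots> = (\<Sum>z\<in>bits (outs B). sem A y z * (if z = g x then 1 else 0))"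
    using B assms(2) by (intro sum.cong) (auto simp: isperm_def)
  also have "\<dots> = (\<Sum>z\<in>bits (outs B). if z = g x then sem A y z else 0)"
    by (rule sum.cong) auto
  also have "\<dots> = sem A y (g x)" using B assms(2) by (simp add: isperm_def)
  finally show ?thesis .
qed

lemma isperm_Comp:
  assumes A: "isperm A f" and B: "isperm B g" and o: "outs B = ins A"
  shows "isperm (Comp A B) (f \<circ> g)"
  unfolding isperm_def
proof (intro conjI allI impI)
  show "wf (Comp A B)" using A B o by (simp add: isperm_def)
  fix x :: "bool list" assume "length x = ins (Comp A B)"
  then show "length ((f \<circ> g) x) = outs (Comp A B)" using A B o by (simp add: isperm_def)
next
  fix x y :: "bool list" assume x: "length x = ins (Comp A B)" and y: "length y = outs (Comp A B)"
  have "sem (Comp A B) y x = sem A y (g x)" using x by (intro comp_perm_right[OF B]) simp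
  also have "\<dots> = (if y = (f \<circ> g) x then 1 else 0)" using A B o x y by (simp add: isperm_def)
  finally show "sem (Comp A B) y x = (if y = (f \<circ> g) x then 1 else 0)" .
qed

lemma wires_io[simp]: "ins (wires r) = r" "outs (wires r) = r" "wf (wires r)"
  by (induction r) auto

lemma isperm_wires: "isperm (wires r) id"
proof (induction r)
  case 0 then show ?case using isperm_Emp by (simp add: id_def)
next
  case (Suc r)
  show ?case unfolding wires.simps using isperm_Tens[OF isperm_Wire Suc] by (rule isperm_cong) simp
qed

fun move1 :: "nat \<Rightarrow> zx" where
  "move1 0 = Wire"
| "move1 (Suc q) = Comp (Tens Wire (move1 q)) (Tens Swap (wires q))"

lemma move1_io[simp]: "ins (move1 q) = Suc q" "outs (move1 q) = Suc q"
  by (induction q) auto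

lemma isperm_move1: "isperm (move1 q) (\<lambda>x. tl x @ [hd x])"
proof (induction q)
  case 0
  show ?case unfolding move1.simps using isperm_Wire by (rule isperm_cong) (auto simp: length_Suc_conv)
next
  case (Suc q)
  have "isperm (move1 (Suc q)) ((\<lambda>x. id (take 1 x) @ (tl (drop 1 x) @ [hd (drop 1 x)])) \<circ>
       (\<lambda>x. rev (take 2 x) @ id (drop 2 x)))"
    unfolding move1.simps
    using isperm_Comp[OF isperm_Tens[OF isperm_Wire Suc] isperm_Tens[OF isperm_Swap isperm_wires]]
    by simp
  then show ?case
    by (rule isperm_cong) (auto simp: length_Suc_conv numeral_2_eq_2)
qed

fun bswap :: "nat \<Rightarrow> nat \<Rightarrow> zx" where
  "bswap 0 q = wires q"
| "bswap (Suc p) q = Comp (Tens (move1 q) (wires p)) (Tens Wire (bswap p q))"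

lemma bswap_io[simp]: "ins (bswap p q) = p + q" "outs (bswap p q) = q + p"
  by (induction p) auto

lemma isperm_bswap: "isperm (bswap p q) (\<lambda>x. drop p x @ take p x)"
proof (induction p)
  case 0
  show ?case unfolding bswap.simps using isperm_wires by (rule isperm_cong) simp
next
  case (Suc p)
  have "isperm (bswap (Suc p) q) ((\<lambda>x. (tl (take (Suc q) x) @ [hd (take (Suc q) x)]) @ id (drop (Suc q) x)) \<circ>
       (\<lambda>x. id (take 1 x) @ (drop p (drop 1 x) @ take p (drop 1 x))))"
    unfolding bswap.simps
    using isperm_Comp[OF isperm_Tens[OF isperm_move1 isperm_wires] isperm_Tens[OF isperm_Wire Suc]]
    by simp
  then show ?case
    by (rule isperm_cong) (auto simp: length_Suc_conv)
qed




lemma bool_quant_simps[simp]: "(\<forall>x::bool. \<not> x) = False" "(\<exists>x::bool. x) = True" "(\<forall>x::bool. x) = False" "(\<exists>x::bool. \<not>x) = True"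
  by auto

lemma sum_bits_one: "(\<Sum>z\<in>bits 1. f z) = f [False] + f [True]"
  using sum_bits_1 by simp

lemma comp1: "outs B = 1 \<Longrightarrow> sem (Comp A B) y x = sem A y [False] * sem B [False] x + sem A y [True] * sem B [True] x"
  by (simp add: sum_bits_1)

lemma cis_prod: "(1 + cis a) * (1 + cis (-a)) = complex_of_real (2 + 2 * cos a)"
proof -
  have "sin a * sin a + cos a * cos a = 1" using sin_cos_squared_add[of a] by (simp add: power2_eq_square)
  then show ?thesis by (simp add: complex_eq_iff algebra_simps)
qed

lemma pos4: "0 < r \<Longrightarrow> r \<le> 4 \<Longrightarrow> \<exists>S. wf S \<and> ins S = 0 \<and> outs S = 0 \<and> sem S [] [] = complex_of_real r"
proof -
  assume r: "0 < r" "r \<le> 4"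
  define a where "a = arccos (r/2 - 1)"
  have ca: "cos a = r/2 - 1" unfolding a_def using r by (intro cos_arccos) auto
  let ?S = "Tens (XS 0 0 a) (XS 0 0 (-a))"
  have "sem ?S [] [] = (1 + cis a) * (1 + cis (-a))"
    by (simp add: cis_conv_exp)
  also have "\<dots> = complex_of_real r" by (simp add: cis_prod ca)
  finally show ?thesis by (intro exI[of _ ?S]) simp
qed

lemma pos_pow: "\<forall>r. 0 < r \<and> r \<le> 4 * 2 ^ k \<longrightarrow> (\<exists>S. wf S \<and> ins S = 0 \<and> outs S = 0 \<and> sem S [] [] = complex_of_real r)"
proof (induction k)
  case 0 then show ?case using pos4 by simp
next
  case (Suc k)
  show ?case
  proof (intro allI impI)
    fix r :: real assume r: "0 < r \<and> r \<le> 4 * 2 ^ Suc k"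
    then have "0 < r/2 \<and> r/2 \<le> 4 * 2 ^ k" by simp
    then obtain S where S: "wf S" "ins S = 0" "outs S = 0" "sem S [] [] = complex_of_real (r/2)"
      using Suc by blast
    let ?T = "Tens S (ZS 0 0 0)"
    have "sem ?T [] [] = complex_of_real r" using S by simp
    then show "\<exists>S. wf S \<and> ins S = 0 \<and> outs S = 0 \<and> sem S [] [] = complex_of_real r"
      using S by (intro exI[of _ ?T]) simp
  qed
qed

lemma pos_scal: "0 < r \<Longrightarrow> \<exists>S. wf S \<and> ins S = 0 \<and> outs S = 0 \<and> sem S [] [] = complex_of_real r"
proof -
  assume r: "0 < r"
  obtain k where "r < 2 ^ k" using real_arch_pow[of 2 r] by auto
  moreover have "(2::real) ^ k \<le> 4 * 2 ^ k" by simp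
  ultimately have "r \<le> 4 * 2 ^ k" by linarith
  then show ?thesis using pos_pow r by blast
qed

lemma phase_scal: "sem (Comp (ZS 1 0 pi) (XS 0 1 t)) [] [] = complex_of_real (sqrt 2) * exp (\<i> * complex_of_real t)"
proof -
  have "sem (Comp (ZS 1 0 pi) (XS 0 1 t)) [] [] =
     complex_of_real (1 / sqrt 2) * (1 + exp (\<i> * complex_of_real t)) - complex_of_real (1 / sqrt 2) * (1 - exp (\<i> * complex_of_real t))"
    by (simp add: sum_bits_1 nones_def field_simps)
  also have "\<dots> = complex_of_real (2 / sqrt 2) * exp (\<i> * complex_of_real t)"
    by (simp add: field_simps add_divide_distrib[symmetric] diff_divide_distrib[symmetric])
  also have "complex_of_real (2 / sqrt 2) = complex_of_real (sqrt 2)"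
    by (simp add: real_div_sqrt)
  finally show ?thesis .
qed

lemma scal_ex: "\<exists>S. wf S \<and> ins S = 0 \<and> outs S = 0 \<and> sem S [] [] = z"
proof (cases "z = 0")
  case True
  have "sem (XS 0 0 pi) [] [] = 0" by simp
  then show ?thesis using True by (intro exI[of _ "XS 0 0 pi"]) simp
next
  case False
  then have "0 < cmod z / sqrt 2" by simp
  then obtain S where S: "wf S" "ins S = 0" "outs S = 0" "sem S [] [] = complex_of_real (cmod z / sqrt 2)"
    using pos_scal by blast
  let ?T = "Tens S (Comp (ZS 1 0 pi) (XS 0 1 (Arg z)))"
  have "sem ?T [] [] = complex_of_real (cmod z / sqrt 2) * (complex_of_real (sqrt 2) * cis (Arg z))"
    using S phase_scal[of "Arg z"] by (simp add: cis_conv_exp)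
  also have "\<dots> = complex_of_real (cmod z) * sgn z"
    using False by (simp add: cis_Arg field_simps)
  also have "\<dots> = z" using False by (simp add: sgn_eq)
  finally show ?thesis using S by (intro exI[of _ ?T]) simp
qed

definition scal :: "complex \<Rightarrow> zx" where
  "scal z = (SOME S. wf S \<and> ins S = 0 \<and> outs S = 0 \<and> sem S [] [] = z)"

lemma scal: "wf (scal z)" "ins (scal z) = 0" "outs (scal z) = 0" "sem (scal z) [] [] = z"
  using someI_ex[OF scal_ex[of z]] unfolding scal_def by auto




lemma sum_bits_two: "(\<Sum>z\<in>bits 2. f z) = f [False,False] + f [False,True] + f [True,False] + f [True,True]"
  by (simp add: numeral_2_eq_2 sum_bits_Suc add.assoc)

lemma unit_angle: "cmod u = 1 \<Longrightarrow> \<exists>a. exp (\<i> * complex_of_real a) = u"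
proof -
  assume u: "cmod u = 1"
  then have "u \<noteq> 0" by auto
  then have "exp (\<i> * complex_of_real (Arg u)) = sgn u" by (simp add: cis_Arg cis_conv_exp[symmetric])
  also have "\<dots> = u" using u by (simp add: sgn_eq)
  finally show ?thesis by blast
qed

lemma diag_ex:
  assumes p: "p \<noteq> 0" and q: "q \<noteq> 0"
  shows "\<exists>D. wf D \<and> ins D = 1 \<and> outs D = 1 \<and> (\<forall>a b. sem D [b] [a] = (if a = b then (if a then q else p) else 0))"
proof -
  define \<rho> where "\<rho> = q / p"
  define r where "r = cmod \<rho>"
  have r0: "r > 0" using p q by (simp add: r_def \<rho>_def)
  define w where "w = (1 - \<i> * complex_of_real r) / (1 + \<i> * complex_of_real r)"
  have e1: "1 + \<i> * complex_of_real r = Complex 1 r" by (simp add: complex_eq_iff)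
  have e2: "1 - \<i> * complex_of_real r = Complex 1 (-r)" by (simp add: complex_eq_iff)
  have nz: "1 + \<i> * complex_of_real r \<noteq> 0" by (simp add: e1 complex_eq_iff)
  have "0 < 1 + r\<^sup>2" by (intro add_pos_nonneg) auto
  then have rr: "1 + r\<^sup>2 \<noteq> 0" by linarith
  have "cmod w = 1" using rr unfolding w_def e1 e2 by (simp add: norm_divide complex_norm complex_eq_iff add_pos_nonneg)
  then obtain \<alpha> where \<alpha>: "exp (\<i> * complex_of_real \<alpha>) = w" using unit_angle by blast
  define v where "v = - \<i> * \<rho> / complex_of_real r"
  have "cmod v = 1" using r0 by (simp add: v_def norm_divide norm_mult r_def)
  then obtain \<beta> where \<beta>: "exp (\<i> * complex_of_real \<beta>) = v" using unit_angle by blast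
  define \<kappa> where "\<kappa> = p * (1 + \<i> * complex_of_real r) / complex_of_real (sqrt 2)"
  define E where "E = Comp (XS 1 0 \<alpha>) (ZS 1 1 \<beta>)"
  let ?D = "Tens (scal \<kappa>) (Comp (Tens Wire E) (ZS 1 2 0))"
  have f1: "(1 + \<i> * complex_of_real r) * (1 + w) = 2" unfolding w_def using nz by (simp add: field_simps)
  have f2: "(1 + \<i> * complex_of_real r) * (1 - w) = 2 * \<i> * complex_of_real r" unfolding w_def using nz by (simp add: field_simps)
  have s2: "complex_of_real (sqrt 2) * complex_of_real (sqrt 2) = 2"
    by (simp flip: of_real_mult)
  have E0: "sem E [] [False] = complex_of_real (1 / sqrt 2) * (1 + w)"
    unfolding E_def by (simp add: sum_bits_1 nones_def \<alpha>)
  have E1: "sem E [] [True] = complex_of_real (1 / sqrt 2) * (1 - w) * v"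
    unfolding E_def by (simp add: sum_bits_1 nones_def \<alpha> \<beta>)
  have v0: "\<kappa> * (complex_of_real (1 / sqrt 2) * (1 + w)) = p"
  proof -
    have "\<kappa> * (complex_of_real (1 / sqrt 2) * (1 + w)) = p * ((1 + \<i> * complex_of_real r) * (1 + w)) / (complex_of_real (sqrt 2) * complex_of_real (sqrt 2))"
      by (simp add: \<kappa>_def field_simps)
    also have "\<dots> = p" by (simp add: f1 s2)
    finally show ?thesis .
  qed
  have v1: "\<kappa> * (complex_of_real (1 / sqrt 2) * (1 - w) * v) = q"
  proof -
    have "\<kappa> * (complex_of_real (1 / sqrt 2) * (1 - w) * v) = p * ((1 + \<i> * complex_of_real r) * (1 - w)) * v / (complex_of_real (sqrt 2) * complex_of_real (sqrt 2))"
      by (simp add: \<kappa>_def field_simps)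
    also have "\<dots> = p * (2 * \<i> * complex_of_real r) * v / 2" by (simp add: f2 s2)
    also have "\<dots> = q" using r0 p by (simp add: v_def \<rho>_def field_simps)
    finally show ?thesis .
  qed
  have "\<forall>a b. sem ?D [b] [a] = (if a = b then (if a then q else p) else 0)"
  proof (intro allI)
    fix a b :: bool
    have "sem ?D [b] [a] = \<kappa> * (if a = b then sem E [] [a] else 0)"
      by (cases a; cases b) (simp_all add: scal sum_bits_two E_def[symmetric])
    also have "\<dots> = (if a = b then (if a then q else p) else 0)"
      by (cases a; cases b) (simp_all only: E0 E1 v0 v1 if_True if_False mult_zero_right simp_thms)
    finally show "sem ?D [b] [a] = (if a = b then (if a then q else p) else 0)" .
  qed
  moreover have "wf ?D \<and> ins ?D = 1 \<and> outs ?D = 1" unfolding E_def by (simp add: scal)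
  ultimately show ?thesis by blast
qed




definition dg :: "complex \<Rightarrow> complex \<Rightarrow> zx" where
  "dg p q = (SOME D. wf D \<and> ins D = 1 \<and> outs D = 1 \<and> (\<forall>a b. sem D [b] [a] = (if a = b then (if a then q else p) else 0)))"

lemma dg: assumes "p \<noteq> 0" "q \<noteq> 0"
  shows "wf (dg p q)" "ins (dg p q) = 1" "outs (dg p q) = 1"
    "sem (dg p q) [b] [a] = (if a = b then (if a then q else p) else 0)"
  using someI_ex[OF diag_ex[OF assms]] unfolding dg_def by auto

definition s3 :: complex where "s3 = complex_of_real (sqrt 3)"
definition hh :: complex where "hh = complex_of_real (1 / sqrt 2)"

lemma s3s: "s3 * s3 = 3" unfolding s3_def by (simp flip: of_real_mult)
lemma hhs: "hh * hh = 1/2" unfolding hh_def by (simp flip: of_real_mult)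
lemma s3nz: "s3 \<noteq> 0" unfolding s3_def by simp

definition D1 where "D1 = dg 1 (\<i> / s3)"
definition Dm where "Dm = dg (1 + \<i> * s3) (-1 + \<i> * s3)"
definition D2 where "D2 = dg (- \<i> * s3 / 2) (-1/2)"

lemma nz1: "1 + \<i> * s3 \<noteq> 0" "-1 + \<i> * s3 \<noteq> 0" "\<i> / s3 \<noteq> 0" "- \<i> * s3 / 2 \<noteq> 0"
  using s3nz by (auto simp: complex_eq_iff s3_def)

lemma D1: "wf D1" "ins D1 = 1" "outs D1 = 1" "sem D1 [b] [a] = (if a = b then (if a then \<i> / s3 else 1) else 0)"
  unfolding D1_def using dg nz1 by auto
lemma Dm: "wf Dm" "ins Dm = 1" "outs Dm = 1" "sem Dm [b] [a] = (if a = b then (if a then -1 + \<i> * s3 else 1 + \<i> * s3) else 0)"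
  unfolding Dm_def using dg nz1 by auto
lemma D2: "wf D2" "ins D2 = 1" "outs D2 = 1" "sem D2 [b] [a] = (if a = b then (if a then -1/2 else - \<i> * s3 / 2) else 0)"
  unfolding D2_def using dg nz1 by auto

lemma Had_sem: "sem Had [b] [a] = (if a \<and> b then - hh else hh)"
  unfolding hh_def by simp

definition Tri where "Tri = Comp Had (Comp D1 (Comp Had (Comp Dm (Comp Had (Comp D2 Had)))))"

lemma Tri_io: "wf Tri" "ins Tri = 1" "outs Tri = 1"
  unfolding Tri_def by (simp_all add: D1 Dm D2)

lemma hh2: "hh * (hh * x) = x / 2" using hhs by (metis mult.assoc times_divide_eq_left mult_1)
lemma s22: "complex_of_real (sqrt 2) * (complex_of_real (sqrt 2) * x) = 2 * x"
  by (simp add: mult.assoc[symmetric] flip: of_real_mult)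
lemma s22': "complex_of_real (sqrt 2) * complex_of_real (sqrt 2) = 2"
  by (simp flip: of_real_mult)
lemma s32: "s3 * (s3 * x) = 3 * x" using s3s by (metis mult.assoc)

lemma Tri_sem: "sem Tri [t] [c] = (if t then (if c then 1 else 0) else 1)"
  unfolding Tri_def
  by (cases t; cases c) (simp_all del: sem.simps(9) add: comp1 Had_sem D1 Dm D2 Tri_io ring_distribs mult.left_commute mult.assoc hh2 s32 s22 s22' s3nz field_simps)




fun par :: "zx \<Rightarrow> nat \<Rightarrow> zx" where
  "par A 0 = Emp"
| "par A (Suc k) = Tens A (par A k)"

lemma par_io: "ins A = 1 \<Longrightarrow> outs A = 1 \<Longrightarrow> wf A \<Longrightarrow> ins (par A k) = k \<and> outs (par A k) = k \<and> wf (par A k)"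
  by (induction k) auto

lemma par_sem: "ins A = 1 \<Longrightarrow> outs A = 1 \<Longrightarrow> length y = k \<Longrightarrow> length x = k \<Longrightarrow>
   sem (par A k) y x = (\<Prod>j<k. sem A [y!j] [x!j])"
proof (induction k arbitrary: x y)
  case 0 then show ?case by simp
next
  case (Suc k)
  then obtain a x' b y' where x: "x = a # x'" and y: "y = b # y'" and l: "length x' = k" "length y' = k"
    by (cases x; cases y) auto
  have "sem (par A (Suc k)) y x = sem A [b] [a] * sem (par A k) y' x'"
    using Suc.prems x y by simp
  also have "\<dots> = (\<Prod>j<Suc k. sem A [y!j] [x!j])"
    using Suc.IH[OF Suc.prems(1,2) l(2) l(1)] x y by (simp only: prod.lessThan_Suc_shift) simp
  finally show ?case .
qed

lemma fanout: "length z = N \<Longrightarrow> sem (ZS 1 N 0) z [t] = (if z = replicate N t then 1 else 0)"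
proof -
  assume l: "length z = N"
  have r: "(z = replicate N t) = (\<forall>b\<in>set z. b = t)"
  proof
    assume "z = replicate N t" then show "\<forall>b\<in>set z. b = t" by simp
  next
    assume "\<forall>b\<in>set z. b = t" then show "z = replicate N t" using replicate_length_same[of z t] l by simp
  qed
  show ?thesis using r by (cases t) simp_all
qed

definition G :: "nat \<Rightarrow> zx \<Rightarrow> zx \<Rightarrow> zx" where
  "G N L K = Comp (par L N) (Comp (ZS 1 N 0) K)"

lemma G_io: "ins L = 1 \<Longrightarrow> outs L = 1 \<Longrightarrow> wf L \<Longrightarrow> ins K = 1 \<Longrightarrow> outs K = 1 \<Longrightarrow> wf K \<Longrightarrow>
   wf (G N L K) \<and> ins (G N L K) = 1 \<and> outs (G N L K) = N"
  unfolding G_def using par_io[of L N] by simp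

lemma G_sem:
  assumes L: "ins L = 1" "outs L = 1" and K: "ins K = 1" "outs K = 1" and w: "length w = N"
  shows "sem (G N L K) w [c] = sem K [False] [c] * (\<Prod>j<N. sem L [w!j] [False]) + sem K [True] [c] * (\<Prod>j<N. sem L [w!j] [True])"
proof -
  have "sem (G N L K) w [c] = (\<Sum>z\<in>bits N. sem (par L N) w z * sem (Comp (ZS 1 N 0) K) z [c])"
    unfolding G_def by (subst sem.simps(9)) (simp only: outs.simps)
  also have "\<dots> = (\<Sum>z\<in>bits N. (if z = replicate N False then sem (par L N) w z * sem K [False] [c] else 0)
      + (if z = replicate N True then sem (par L N) w z * sem K [True] [c] else 0))"
  proof (intro sum.cong refl)
    fix z assume z: "z \<in> bits N"
    have "sem (Comp (ZS 1 N 0) K) z [c] = sem (ZS 1 N 0) z [False] * sem K [False] [c] + sem (ZS 1 N 0) z [True] * sem K [True] [c]"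
      by (rule comp1) (simp add: K)
    also have "\<dots> = (if z = replicate N False then 1 else 0) * sem K [False] [c] + (if z = replicate N True then 1 else 0) * sem K [True] [c]"
      using z by (simp only: fanout mem_bits)
    finally show "sem (par L N) w z * sem (Comp (ZS 1 N 0) K) z [c] = (if z = replicate N False then sem (par L N) w z * sem K [False] [c] else 0)
      + (if z = replicate N True then sem (par L N) w z * sem K [True] [c] else 0)"
      by (cases "z = replicate N False"; cases "z = replicate N True") (simp_all add: distrib_left)
  qed
  also have "\<dots> = sem (par L N) w (replicate N False) * sem K [False] [c] + sem (par L N) w (replicate N True) * sem K [True] [c]"
    by (simp only: sum.distrib sum.delta sum.delta' finite_bits mem_bits length_replicate if_True refl simp_thms)
  also have "\<dots> = sem K [False] [c] * (\<Prod>j<N. sem L [w!j] [False]) + sem K [True] [c] * (\<Prod>j<N. sem L [w!j] [True])"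
    using L w by (simp add: par_sem)
  finally show ?thesis .
qed




definition lam :: "nat \<Rightarrow> nat \<Rightarrow> complex" where
  "lam n m = complex_of_real (sqrt 2) ^ (n + m)"

definition P :: "zx \<Rightarrow> zx \<Rightarrow> bool" where
  "P D C \<longleftrightarrow> wf C \<and> ins C = 1 \<and> outs C = ins D + outs D \<and>
     (\<forall>w. length w = ins D + outs D \<longrightarrow> sem C w [False] = 1) \<and>
     (\<forall>x y. length x = ins D \<longrightarrow> length y = outs D \<longrightarrow> sem C (x @ y) [True] = lam (ins D) (outs D) * sem D y x)"

lemma P_cong: "P D C \<Longrightarrow> ins D' = ins D \<Longrightarrow> outs D' = outs D \<Longrightarrow>
  (\<And>x y. length x = ins D \<Longrightarrow> length y = outs D \<Longrightarrow> sem D' y x = sem D y x) \<Longrightarrow> P D' C"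
  unfolding P_def by simp

lemma nones_append[simp]: "nones (x @ y) = nones x + nones y"
  by (simp add: nones_def)

lemma prod_sign: "(\<Prod>j<length w. if w!j then -1 else 1::complex) = (-1) ^ nones w"
proof (induction w)
  case Nil then show ?case by (simp add: nones_def)
next
  case (Cons a w)
  have "(\<Prod>j<length (a#w). if (a#w)!j then -1 else 1::complex) = (if a then -1 else 1) * (\<Prod>j<length w. if w!j then -1 else 1)"
    by (simp only: length_Cons prod.lessThan_Suc_shift) simp
  then show ?case using Cons by (simp add: nones_def)
qed

definition LX where "LX = Tens Had (scal (complex_of_real (sqrt 2)))"
definition KX where "KX a = Comp (ZS 1 1 a) Tri"

lemma LX: "wf LX" "ins LX = 1" "outs LX = 1" "sem LX [w] [t] = (if t \<and> w then -1 else 1)"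
  unfolding LX_def by (simp_all add: scal)

lemma KX: "wf (KX a)" "ins (KX a) = 1" "outs (KX a) = 1" "sem (KX a) [t] [c] = (if t then (if c then exp (\<i> * complex_of_real a) else 0) else 1)"
  unfolding KX_def by (simp_all del: sem.simps(9) add: comp1 Tri_io Tri_sem)

definition gX where "gX N a = G N LX (KX a)"

lemma gX_io: "wf (gX N a)" "ins (gX N a) = 1" "outs (gX N a) = N"
  unfolding gX_def using G_io[OF LX(2,3,1) KX(2,3,1)] by auto

lemma gX_sem: "length w = N \<Longrightarrow> sem (gX N a) w [c] = (if c then 1 + exp (\<i> * complex_of_real a) * (-1) ^ nones w else 1)"
  unfolding gX_def using prod_sign[of w] by (simp add: G_sem LX KX)

lemma P_XS: "P (XS n m a) (gX (n+m) a)"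
  unfolding P_def
proof (intro conjI allI impI)
  fix x y :: "bool list" assume "length x = ins (XS n m a)" "length y = outs (XS n m a)"
  then have l: "length (x@y) = n + m" by simp
  have k: "complex_of_real (sqrt 2) ^ k * (1 / complex_of_real (sqrt 2)) ^ k = 1" for k
    by (simp add: power_one_over)
  have "sem (gX (n + m) a) (x @ y) [True] = 1 + exp (\<i> * complex_of_real a) * (-1) ^ (nones x + nones y)"
    by (simp add: gX_sem[OF l])
  then show "sem (gX (n + m) a) (x @ y) [True] = lam (ins (XS n m a)) (outs (XS n m a)) * sem (XS n m a) y x"
    by (simp add: lam_def add.commute mult.assoc[symmetric] k)
qed (simp_all add: gX_io gX_sem)

definition NOTd where "NOTd = XS 1 1 pi"
lemma NOTd: "wf NOTd" "ins NOTd = 1" "outs NOTd = 1" "sem NOTd [b] [a] = (if a = b then 0 else 1)"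
  unfolding NOTd_def by (auto simp: nones_def)

definition LH where "LH = Comp NOTd (Comp Tri NOTd)"
lemma LH: "wf LH" "ins LH = 1" "outs LH = 1" "sem LH [w] [t] = (if t then (if w then 1 else 0) else 1)"
  unfolding LH_def by (simp_all del: sem.simps(9) add: comp1 Tri_io Tri_sem NOTd)

definition sq2 :: complex where "sq2 = complex_of_real (sqrt 2)"
lemma sq2nz: "sq2 \<noteq> 0" by (simp add: sq2_def)

definition KH where "KH = Comp (dg 1 (-2)) (Comp Tri (dg 1 sq2))"
lemma KH: "wf KH" "ins KH = 1" "outs KH = 1"
  "sem KH [t] [c] = (if t then (if c then -2 * sq2 else 0) else (if c then sq2 else 1))"
  unfolding KH_def by (simp_all del: sem.simps(9) add: comp1 Tri_io Tri_sem dg sq2nz)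

definition gH where "gH = G 2 LH KH"

lemma gH_io: "wf gH" "ins gH = 1" "outs gH = 2"
  unfolding gH_def using G_io[OF LH(2,3,1) KH(2,3,1)] by auto

lemma prod2: "(\<Prod>j<(2::nat). f j) = f 0 * (f 1 :: complex)"
  by (simp add: numeral_2_eq_2)

lemma P_Had: "P Had gH"
  unfolding P_def
proof (intro conjI allI impI)
  fix w :: "bool list" assume "length w = ins Had + outs Had"
  then show "sem gH w [False] = 1"
    unfolding gH_def by (simp add: G_sem LH KH prod2)
next
  fix x y :: "bool list" assume "length x = ins Had" "length y = outs Had"
  then obtain a b where x: "x = [a]" and y: "y = [b]" by (auto simp: length_Suc_conv)
  have s: "sq2 * sq2 = 2" by (simp add: sq2_def flip: of_real_mult)
  show "sem gH (x @ y) [True] = lam (ins Had) (outs Had) * sem Had y x"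
    unfolding gH_def x y using s
    by (cases a; cases b) (simp_all add: G_sem LH KH prod2 lam_def sq2_def field_simps flip: of_real_mult)
qed (simp_all add: gH_io)

lemma P_Emp: "P Emp (ZS 1 0 0)"
  unfolding P_def by (simp add: lam_def)

lemma P_Wire: "P Wire (gX 2 0)"
proof -
  have "P (XS 1 1 0) (gX 2 0)" using P_XS[of 1 1 0] unfolding one_add_one .
  then show ?thesis
  proof (rule P_cong)
    fix x y :: "bool list" assume "length x = ins (XS 1 1 0)" "length y = outs (XS 1 1 0)"
    then obtain a b where "x = [a]" "y = [b]" by (auto simp: length_Suc_conv)
    then show "sem Wire y x = sem (XS 1 1 0) y x"
      by (cases a; cases b) (simp_all add: nones_def)
  qed simp_all
qed

lemma inv_s2_sq: "(1 / complex_of_real (sqrt 2))\<^sup>2 = 1/2"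
  by (simp add: power_one_over flip: of_real_power)

lemma P_Cup: "P Cup (gX 2 0)"
proof -
  have "P (XS 2 0 0) (gX 2 0)" using P_XS[of 2 0 0] unfolding add_0_right .
  then show ?thesis
  proof (rule P_cong)
    fix x y :: "bool list" assume "length x = ins (XS 2 0 0)" "length y = outs (XS 2 0 0)"
    then obtain a b where "x = [a, b]" "y = []" by (auto simp: length_Suc_conv numeral_2_eq_2)
    then show "sem Cup y x = sem (XS 2 0 0) y x"
      by (cases a; cases b) (simp_all add: nones_def inv_s2_sq)
  qed simp_all
qed

lemma P_Cap: "P Cap (gX 2 0)"
proof -
  have "P (XS 0 2 0) (gX 2 0)" using P_XS[of 0 2 0] unfolding add_0 .
  then show ?thesis
  proof (rule P_cong)
    fix x y :: "bool list" assume "length x = ins (XS 0 2 0)" "length y = outs (XS 0 2 0)"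
    then obtain a b where "y = [a, b]" "x = []" by (auto simp: length_Suc_conv numeral_2_eq_2)
    then show "sem Cap y x = sem (XS 0 2 0) y x"
      by (cases a; cases b) (simp_all add: nones_def inv_s2_sq)
  qed simp_all
qed




lemma sum_if_out: "(\<Sum>u\<in>S. if Q then f u else 0) = (if Q then (\<Sum>u\<in>S. f u) else 0)"
  by simp

lemma sum_delta_bits: "length v = k \<Longrightarrow> (\<Sum>u\<in>bits k. if u = v then f u else 0) = f v"
  by (simp add: sum.delta)

lemma sum4:
  assumes "length a = k1" "length b = k2" "length c = k3" "length d = k4"
  shows "(\<Sum>u1\<in>bits k1. \<Sum>u2\<in>bits k2. \<Sum>u3\<in>bits k3. \<Sum>u4\<in>bits k4.
     if u1 = a \<and> u2 = b \<and> u3 = c \<and> u4 = d then F else 0) = F"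
proof -
  have "\<And>u1 u2 u3 u4. (if u1 = a \<and> u2 = b \<and> u3 = c \<and> u4 = d then F else 0) =
     (if u1 = a then (if u2 = b then (if u3 = c then (if u4 = d then F else 0) else 0) else 0) else 0)"
    by simp
  then show ?thesis using assms by (simp only: sum_if_out sum_delta_bits)
qed

lemma bswap_wf[simp]: "wf (bswap p q)"
  using isperm_bswap[of p q] by (simp add: isperm_def)

lemma wires_sem: "length x = r \<Longrightarrow> length y = r \<Longrightarrow> sem (wires r) y x = (if y = x then 1 else 0)"
  using isperm_wires[of r] by (simp add: isperm_def)

lemma bswap_sem: "length x = p + q \<Longrightarrow> length y = q + p \<Longrightarrow> sem (bswap p q) y x = (if y = drop p x @ take p x then 1 else 0)"
  using isperm_bswap[of p q] by (simp add: isperm_def)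

definition TA :: "nat \<Rightarrow> nat \<Rightarrow> nat \<Rightarrow> nat \<Rightarrow> zx" where
  "TA n1 m1 n2 m2 = Tens (wires n1) (Tens (bswap m1 n2) (wires m2))"

lemma TA_io: "wf (TA n1 m1 n2 m2)" "ins (TA n1 m1 n2 m2) = n1 + (m1 + n2 + m2)" "outs (TA n1 m1 n2 m2) = n1 + (n2 + m1 + m2)"
  unfolding TA_def by simp_all

lemma TA_sem:
  assumes "length x1 = n1" "length x2 = n2" "length y1 = m1" "length y2 = m2"
    "length u1 = n1" "length u2 = m1" "length u3 = n2" "length u4 = m2"
  shows "sem (TA n1 m1 n2 m2) (x1 @ x2 @ y1 @ y2) (u1 @ u2 @ u3 @ u4) = (if u1 = x1 \<and> u2 = y1 \<and> u3 = x2 \<and> u4 = y2 then 1 else 0)"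
proof -
  have "sem (TA n1 m1 n2 m2) (x1 @ x2 @ y1 @ y2) (u1 @ u2 @ u3 @ u4) =
     sem (wires n1) x1 u1 * (sem (bswap m1 n2) (x2 @ y1) (u2 @ u3) * sem (wires m2) y2 u4)"
    unfolding TA_def using assms by simp
  also have "\<dots> = (if u1 = x1 \<and> u2 = y1 \<and> u3 = x2 \<and> u4 = y2 then 1 else 0)"
    using assms by (auto simp: wires_sem bswap_sem)
  finally show ?thesis .
qed

definition HC where "HC = Tens Cup (scal (1/2))"

fun Ek :: "nat \<Rightarrow> zx" where
  "Ek 0 = Emp"
| "Ek (Suc k) = Comp (Tens HC (Ek k)) (Tens Wire (Tens (bswap k 1) (wires k)))"

lemma HC_io[simp]: "wf HC" "ins HC = 2" "outs HC = 0"
  unfolding HC_def by (simp_all add: scal)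

lemma HC_sem: "sem HC [] [a, b] = (if a = b then 1/2 else 0)"
  unfolding HC_def by (simp add: scal)

lemma Ek_io: "wf (Ek k) \<and> ins (Ek k) = k + k \<and> outs (Ek k) = 0"
  by (induction k) auto

lemma Ek_sem: "length u = k \<Longrightarrow> length v = k \<Longrightarrow> sem (Ek k) [] (u @ v) = (if u = v then (1/2)^k else 0)"
proof (induction k arbitrary: u v)
  case 0 then show ?case by simp
next
  case (Suc k)
  then obtain a u' b v' where u: "u = a # u'" and v: "v = b # v'" and l: "length u' = k" "length v' = k"
    by (cases u; cases v) auto
  have pB: "isperm (Tens Wire (Tens (bswap k 1) (wires k)))
     (\<lambda>x. id (take (ins Wire) x) @ ((\<lambda>x. drop k x @ take k x) (take (ins (bswap k 1)) (drop (ins Wire) x)) @ id (drop (ins (bswap k 1)) (drop (ins Wire) x))))"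
    by (intro isperm_Tens isperm_Wire isperm_bswap isperm_wires)
  have "sem (Ek (Suc k)) [] (u @ v) = sem (Tens HC (Ek k)) [] (a # b # u' @ v')"
    unfolding Ek.simps by (subst comp_perm_right[OF pB]) (use u v l in simp_all)
  also have "\<dots> = sem HC [] [a, b] * sem (Ek k) [] (u' @ v')"
    using Ek_io[of k] by simp
  also have "\<dots> = (if u = v then (1/2)^Suc k else 0)"
    using Suc.IH[OF l] u v by (simp add: HC_sem)
  finally show ?case .
qed

definition SA :: "nat \<Rightarrow> nat \<Rightarrow> nat \<Rightarrow> zx" where
  "SA n k m = Tens (wires n) (Tens (Ek k) (wires m))"

lemma SA_io: "wf (SA n k m)" "ins (SA n k m) = n + (k + k + m)" "outs (SA n k m) = n + (0 + m)"
  unfolding SA_def using Ek_io[of k] by simp_all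

lemma SA_sem:
  assumes "length x = n" "length y = m" "length u1 = n" "length u2 = k" "length u3 = k" "length u4 = m"
  shows "sem (SA n k m) (x @ y) (u1 @ u2 @ u3 @ u4) = (if u1 = x \<and> u2 = u3 \<and> u4 = y then (1/2)^k else 0)"
proof -
  have "sem (SA n k m) (x @ y) (u1 @ u2 @ u3 @ u4) = sem (wires n) x u1 * (sem (Ek k) [] (u2 @ u3) * sem (wires m) y u4)"
    unfolding SA_def using assms Ek_io[of k] by simp
  then show ?thesis using assms by (auto simp: wires_sem Ek_sem)
qed

lemma mid_sem:
  assumes "ins G1 = 1" "ins G2 = 1" "length z = outs G1 + outs G2 + 0"
  shows "sem (Comp (Tens (Tens G1 G2) (wires 0)) (ZS 1 2 0)) z [c] = sem G1 (take (outs G1) z) [c] * sem G2 (drop (outs G1) z) [c]"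
  using assms by (cases c) (simp_all add: sum_bits_two)




lemma sum_bits4: "(\<Sum>z\<in>bits ((a+b)+(c+d)). f z) = (\<Sum>u1\<in>bits a. \<Sum>u2\<in>bits b. \<Sum>u3\<in>bits c. \<Sum>u4\<in>bits d. f (u1@u2@u3@u4))"
  by (simp add: sum_bits_add)

lemma tens_core:
  assumes G: "ins G1 = 1" "ins G2 = 1" "outs G1 = n1 + m1" "outs G2 = n2 + m2"
    and l: "length x1 = n1" "length x2 = n2" "length y1 = m1" "length y2 = m2"
  shows "sem (Comp (TA n1 m1 n2 m2) (Comp (Tens (Tens G1 G2) (wires 0)) (ZS 1 2 0))) (x1@x2@y1@y2) [c]
     = sem G1 (x1@y1) [c] * sem G2 (x2@y2) [c]"
proof -
  let ?M = "Comp (Tens (Tens G1 G2) (wires 0)) (ZS 1 2 0)"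
  have "sem (Comp (TA n1 m1 n2 m2) ?M) (x1@x2@y1@y2) [c] =
     (\<Sum>z\<in>bits ((n1+m1)+(n2+m2)). sem (TA n1 m1 n2 m2) (x1@x2@y1@y2) z * sem ?M z [c])"
    by (subst sem.simps(9)) (simp add: G)
  also have "\<dots> = (\<Sum>u1\<in>bits n1. \<Sum>u2\<in>bits m1. \<Sum>u3\<in>bits n2. \<Sum>u4\<in>bits m2.
      if u1 = x1 \<and> u2 = y1 \<and> u3 = x2 \<and> u4 = y2 then sem G1 (x1@y1) [c] * sem G2 (x2@y2) [c] else 0)"
    unfolding sum_bits4
  proof (intro sum.cong refl)
    fix u1 u2 u3 u4 assume u: "u1 \<in> bits n1" "u2 \<in> bits m1" "u3 \<in> bits n2" "u4 \<in> bits m2"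
    have "sem ?M (u1@u2@u3@u4) [c] = sem G1 (u1@u2) [c] * sem G2 (u3@u4) [c]"
      using u G by (subst mid_sem) simp_all
    then show "sem (TA n1 m1 n2 m2) (x1@x2@y1@y2) (u1@u2@u3@u4) * sem ?M (u1@u2@u3@u4) [c] =
      (if u1 = x1 \<and> u2 = y1 \<and> u3 = x2 \<and> u4 = y2 then sem G1 (x1@y1) [c] * sem G2 (x2@y2) [c] else 0)"
      using u l by (simp add: TA_sem)
  qed
  also have "\<dots> = sem G1 (x1@y1) [c] * sem G2 (x2@y2) [c]"
    by (rule sum4[OF l(1) l(3) l(2) l(4)])
  finally show ?thesis .
qed

lemma comp_core:
  assumes G: "ins G1 = 1" "ins G3 = 1" "outs G1 = n + k" "outs G3 = k + m"
    and l: "length x = n" "length y = m"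
  shows "sem (Comp (SA n k m) (Comp (Tens (Tens G1 G3) (wires 0)) (ZS 1 2 0))) (x@y) [c]
     = (1/2)^k * (\<Sum>u\<in>bits k. sem G1 (x@u) [c] * sem G3 (u@y) [c])"
proof -
  let ?M = "Comp (Tens (Tens G1 G3) (wires 0)) (ZS 1 2 0)"
  have "sem (Comp (SA n k m) ?M) (x@y) [c] =
     (\<Sum>z\<in>bits ((n+k)+(k+m)). sem (SA n k m) (x@y) z * sem ?M z [c])"
    by (subst sem.simps(9)) (simp add: G)
  also have "\<dots> = (\<Sum>u1\<in>bits n. \<Sum>u2\<in>bits k. \<Sum>u3\<in>bits k. \<Sum>u4\<in>bits m.
      if u1 = x then (if u3 = u2 then (if u4 = y then (1/2)^k * (sem G1 (x@u2) [c] * sem G3 (u2@y) [c]) else 0) else 0) else 0)"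
    unfolding sum_bits4
  proof (intro sum.cong refl)
    fix u1 u2 u3 u4 assume u: "u1 \<in> bits n" "u2 \<in> bits k" "u3 \<in> bits k" "u4 \<in> bits m"
    have "sem ?M (u1@u2@u3@u4) [c] = sem G1 (u1@u2) [c] * sem G3 (u3@u4) [c]"
      using u G by (subst mid_sem) simp_all
    then show "sem (SA n k m) (x@y) (u1@u2@u3@u4) * sem ?M (u1@u2@u3@u4) [c] =
      (if u1 = x then (if u3 = u2 then (if u4 = y then (1/2)^k * (sem G1 (x@u2) [c] * sem G3 (u2@y) [c]) else 0) else 0) else 0)"
      using u l by (auto simp: SA_sem)
  qed
  also have "\<dots> = (\<Sum>u2\<in>bits k. (1/2)^k * (sem G1 (x@u2) [c] * sem G3 (u2@y) [c]))"
    using l by (simp add: sum_if_out sum.delta sum.delta')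
  also have "\<dots> = (1/2)^k * (\<Sum>u\<in>bits k. sem G1 (x@u) [c] * sem G3 (u@y) [c])"
    by (simp add: sum_distrib_left)
  finally show ?thesis .
qed




lemma lam_add: "lam (n1 + n2) (m1 + m2) = lam n1 m1 * lam n2 m2"
  unfolding lam_def by (simp add: power_add[symmetric] add_ac)

lemma lam_comp: "(1/2)^k * (lam n k * lam k m) = lam n m"
proof -
  have s: "complex_of_real (sqrt 2) ^ (k + k) = 2 ^ k"
    by (simp add: power_add[symmetric] mult_2[symmetric] power_mult flip: of_real_power)
  have "lam n k * lam k m = lam n m * complex_of_real (sqrt 2) ^ (k + k)"
    unfolding lam_def by (simp add: power_add[symmetric] add_ac)
  then show ?thesis by (simp add: s power_one_over)
qed

lemma P_Tens:
  assumes "P X1 G1" "P X2 G2" and TT: "TT = Comp (TA (ins X1) (outs X1) (ins X2) (outs X2)) (Comp (Tens (Tens G1 G2) (wires 0)) (ZS 1 2 0))"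
  shows "P (Tens X1 X2) TT"
proof -
  note A = assms(1,2)[unfolded P_def]
  have core: "sem TT (x1@x2@y1@y2) [c]
     = sem G1 (x1@y1) [c] * sem G2 (x2@y2) [c]"
    if "length x1 = ins X1" "length x2 = ins X2" "length y1 = outs X1" "length y2 = outs X2" for x1 x2 y1 y2 c
    unfolding TT using A that by (intro tens_core) auto
  show ?thesis unfolding P_def
  proof (intro conjI allI impI)
    show "wf TT"
      unfolding TT using A by (simp add: TA_io)
    show "ins TT = 1"
      unfolding TT by simp
    show "outs TT = ins (Tens X1 X2) + outs (Tens X1 X2)"
      unfolding TT by (simp add: TA_io)
  next
    fix w :: "bool list" assume "length w = ins (Tens X1 X2) + outs (Tens X1 X2)"
    then have "length w = ins X1 + (ins X2 + (outs X1 + outs X2))" by simp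
    then obtain x1 r1 where "w = x1 @ r1" "length x1 = ins X1" "length r1 = ins X2 + (outs X1 + outs X2)"
      using split_len by blast
    moreover obtain x2 r2 where "r1 = x2 @ r2" "length x2 = ins X2" "length r2 = outs X1 + outs X2"
      using split_len[OF \<open>length r1 = _\<close>] by blast
    moreover obtain y1 y2 where "r2 = y1 @ y2" "length y1 = outs X1" "length y2 = outs X2"
      using split_len[OF \<open>length r2 = _\<close>] by blast
    ultimately show "sem TT w [False] = 1"
      using core A by simp
  next
    fix x y :: "bool list" assume x: "length x = ins (Tens X1 X2)" and y: "length y = outs (Tens X1 X2)"
    have x': "length x = ins X1 + ins X2" using x by simp
    have y': "length y = outs X1 + outs X2" using y by simp
    obtain x1 x2 where xx: "x = x1 @ x2" "length x1 = ins X1" "length x2 = ins X2" using split_len[OF x'] by blast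
    obtain y1 y2 where yy: "y = y1 @ y2" "length y1 = outs X1" "length y2 = outs X2" using split_len[OF y'] by blast
    have "sem TT (x @ y) [True]
       = sem G1 (x1@y1) [True] * sem G2 (x2@y2) [True]"
      using core[OF xx(2,3) yy(2,3)] xx yy by simp
    also have "\<dots> = (lam (ins X1) (outs X1) * sem X1 y1 x1) * (lam (ins X2) (outs X2) * sem X2 y2 x2)"
      using A xx yy by simp
    also have "\<dots> = lam (ins (Tens X1 X2)) (outs (Tens X1 X2)) * sem (Tens X1 X2) y x"
      using xx yy by (simp add: lam_add)
    finally show "sem TT (x @ y) [True]
       = lam (ins (Tens X1 X2)) (outs (Tens X1 X2)) * sem (Tens X1 X2) y x" .
  qed
qed

lemma P_Comp:
  assumes "P X1 G1" "P X3 G3" "outs X1 = ins X3" and TT: "TT = Comp (SA (ins X1) (outs X1) (outs X3)) (Comp (Tens (Tens G1 G3) (wires 0)) (ZS 1 2 0))"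
  shows "P (Comp X3 X1) TT"
proof -
  note A = assms(1,2)[unfolded P_def]
  have core: "sem TT (x@y) [c]
     = (1/2)^(outs X1) * (\<Sum>u\<in>bits (outs X1). sem G1 (x@u) [c] * sem G3 (u@y) [c])"
    if "length x = ins X1" "length y = outs X3" for x y c
    unfolding TT using A that assms(3) by (intro comp_core) auto
  show ?thesis unfolding P_def
  proof (intro conjI allI impI)
    show "wf TT"
      unfolding TT using A assms(3) by (simp add: SA_io)
    show "ins TT = 1"
      unfolding TT by simp
    show "outs TT = ins (Comp X3 X1) + outs (Comp X3 X1)"
      unfolding TT by (simp add: SA_io)
  next
    fix w :: "bool list" assume "length w = ins (Comp X3 X1) + outs (Comp X3 X1)"
    then have w': "length w = ins X1 + outs X3" by simp
    obtain x y where w: "w = x @ y" "length x = ins X1" "length y = outs X3"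
      using split_len[OF w'] by blast
    have "(\<Sum>u\<in>bits (outs X1). sem G1 (x@u) [False] * sem G3 (u@y) [False]) = (\<Sum>u\<in>bits (outs X1). 1)"
      using A w assms(3) by (intro sum.cong refl) simp
    also have "\<dots> = 2 ^ outs X1" by (simp add: card_bits)
    finally show "sem TT w [False] = 1"
      using core[OF w(2,3)] w(1) by (simp add: power_one_over)
  next
    fix x y :: "bool list" assume x: "length x = ins (Comp X3 X1)" and y: "length y = outs (Comp X3 X1)"
    have "(\<Sum>u\<in>bits (outs X1). sem G1 (x@u) [True] * sem G3 (u@y) [True]) =
          (\<Sum>u\<in>bits (outs X1). (lam (ins X1) (outs X1) * lam (ins X3) (outs X3)) * (sem X3 y u * sem X1 u x))"
      using A x y assms(3) by (intro sum.cong refl) simp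
    also have "\<dots> = (lam (ins X1) (outs X1) * lam (outs X1) (outs X3)) * sem (Comp X3 X1) y x"
      using assms(3) by (simp add: sum_distrib_left)
    finally show "sem TT (x @ y) [True]
       = lam (ins (Comp X3 X1)) (outs (Comp X3 X1)) * sem (Comp X3 X1) y x"
      using core[of x y True] x y lam_comp[of "outs X1" "ins X1" "outs X3"] by (simp add: mult.assoc[symmetric])
  qed
qed




lemma sum_prod_bits: "(\<Sum>z\<in>bits k. \<Prod>j<k. f j (z!j)) = (\<Prod>j<k. (f j False + f j True :: complex))"
proof (induction k arbitrary: f)
  case 0 then show ?case by simp
next
  case (Suc k)
  have "(\<Sum>z\<in>bits (Suc k). \<Prod>j<Suc k. f j (z!j)) =
        (\<Sum>z\<in>bits k. f 0 False * (\<Prod>j<k. f (Suc j) (z!j))) + (\<Sum>z\<in>bits k. f 0 True * (\<Prod>j<k. f (Suc j) (z!j)))"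
    by (simp only: sum_bits_Suc prod.lessThan_Suc_shift nth_Cons_0 nth_Cons_Suc)
  also have "\<dots> = (f 0 False + f 0 True) * (\<Prod>j<k. (f (Suc j) False + f (Suc j) True))"
    using Suc.IH[of "\<lambda>j. f (Suc j)"] by (simp add: sum_distrib_left[symmetric] distrib_right)
  also have "\<dots> = (\<Prod>j<Suc k. (f j False + f j True))"
    by (simp only: prod.lessThan_Suc_shift)
  finally show ?case .
qed

lemma prod_if_all: "(\<Prod>j<length y. if Q (y!j) then c else 0) = (if \<forall>b\<in>set y. Q b then c ^ length y else (0::complex))"
proof (induction y)
  case Nil then show ?case by simp
next
  case (Cons a y)
  have "(\<Prod>j<length (a#y). if Q ((a#y)!j) then c else 0) = (if Q a then c else 0) * (\<Prod>j<length y. if Q (y!j) then c else 0)"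
    by (simp only: length_Cons prod.lessThan_Suc_shift) simp
  then show ?case using Cons by simp
qed

definition zdec :: "nat \<Rightarrow> nat \<Rightarrow> real \<Rightarrow> zx" where
  "zdec n m a = Comp (par Had m) (Comp (XS n m a) (par Had n))"

lemma zdec_io: "wf (zdec n m a)" "ins (zdec n m a) = n" "outs (zdec n m a) = m"
  unfolding zdec_def using par_io[of Had n] par_io[of Had m] by simp_all

lemma zdec_sem:
  assumes x: "length x = n" and y: "length y = m"
  shows "sem (zdec n m a) y x = sem (ZS n m a) y x"
proof -
  define c where "c = complex_of_real ((1 / sqrt 2) ^ (n + m))"
  define e where "e = exp (\<i> * complex_of_real a)"
  define H where "H = (\<lambda>p q. sem Had [p] [q])"
  define sg where "sg = (\<lambda>b::bool. if b then -1 else (1::complex))"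
  define Hy where "Hy = (\<lambda>z. \<Prod>j<m. H (y!j) (z!j))"
  define Hx where "Hx = (\<lambda>u. \<Prod>j<n. H (u!j) (x!j))"
  define Sm where "Sm = (\<lambda>z. \<Prod>j<m. sg (z!j))"
  define Sn where "Sn = (\<lambda>u. \<Prod>j<n. sg (u!j))"
  have XSs: "sem (XS n m a) z u = c + c * e * (Sm z * Sn u)" if "length z = m" "length u = n" for z u
  proof -
    have "Sm z = (-1) ^ nones z" using prod_sign[of z] that unfolding Sm_def sg_def by simp
    moreover have "Sn u = (-1) ^ nones u" using prod_sign[of u] that unfolding Sn_def sg_def by simp
    ultimately show ?thesis by (simp add: c_def e_def power_add algebra_simps)
  qed
  have "sem (zdec n m a) y x = (\<Sum>z\<in>bits m. Hy z * (\<Sum>u\<in>bits n. (c + c * e * (Sm z * Sn u)) * Hx u))"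
    unfolding zdec_def
    using par_io[of Had n] par_io[of Had m] x y
    by (simp del: sem.simps(2,3) add: par_sem XSs Hy_def Hx_def H_def)
  also have "\<dots> = c * ((\<Sum>z\<in>bits m. Hy z) * (\<Sum>u\<in>bits n. Hx u)) + c * e * ((\<Sum>z\<in>bits m. Hy z * Sm z) * (\<Sum>u\<in>bits n. Sn u * Hx u))"
    by (simp add: sum.distrib sum_distrib_left sum_distrib_right distrib_right algebra_simps)
  also have "(\<Sum>z\<in>bits m. Hy z) = (\<Prod>j<m. (H (y!j) False + H (y!j) True))"
    unfolding Hy_def by (rule sum_prod_bits)
  also have "(\<Sum>u\<in>bits n. Hx u) = (\<Prod>j<n. (H False (x!j) + H True (x!j)))"
    unfolding Hx_def by (rule sum_prod_bits)
  also have "(\<Sum>z\<in>bits m. Hy z * Sm z) = (\<Prod>j<m. (H (y!j) False * sg False + H (y!j) True * sg True))"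
    unfolding Hy_def Sm_def prod.distrib[symmetric] by (rule sum_prod_bits)
  also have "(\<Sum>u\<in>bits n. Sn u * Hx u) = (\<Prod>j<n. (sg False * H False (x!j) + sg True * H True (x!j)))"
    unfolding Hx_def Sn_def prod.distrib[symmetric] by (rule sum_prod_bits)
  finally have S: "sem (zdec n m a) y x = c * ((\<Prod>j<m. (H (y!j) False + H (y!j) True)) * (\<Prod>j<n. (H False (x!j) + H True (x!j))))
     + c * e * ((\<Prod>j<m. (H (y!j) False * sg False + H (y!j) True * sg True)) * (\<Prod>j<n. (sg False * H False (x!j) + sg True * H True (x!j))))" .
  define r where "r = complex_of_real (sqrt 2)"
  have hv: "H p False + H p True = (if p then 0 else r)" "H False p + H True p = (if p then 0 else r)"
     "H p False * sg False + H p True * sg True = (if p then r else 0)" "sg False * H False p + sg True * H True p = (if p then r else 0)" for p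
    unfolding H_def sg_def r_def by (auto simp: field_simps s22')
  have c1: "c * (r ^ m * r ^ n) = 1"
    unfolding c_def r_def by (simp add: power_add[symmetric] power_one_over add.commute)
  have "sem (zdec n m a) y x = c * ((if \<forall>b\<in>set y. \<not> b then r ^ m else 0) * (if \<forall>b\<in>set x. \<not> b then r ^ n else 0))
     + c * e * ((if \<forall>b\<in>set y. b then r ^ m else 0) * (if \<forall>b\<in>set x. b then r ^ n else 0))"
  proof -
    have p1: "(\<Prod>j<m. if y!j then 0 else r) = (if \<forall>b\<in>set y. \<not> b then r ^ m else 0)"
    proof -
      have "(\<Prod>j<m. if y!j then 0 else r) = (\<Prod>j<length y. if Not (y!j) then r else 0)"
        using y by (intro prod.cong) auto
      then show ?thesis using prod_if_all[of Not y r] y by (simp only:)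
    qed
    have p2: "(\<Prod>j<n. if x!j then 0 else r) = (if \<forall>b\<in>set x. \<not> b then r ^ n else 0)"
    proof -
      have "(\<Prod>j<n. if x!j then 0 else r) = (\<Prod>j<length x. if Not (x!j) then r else 0)"
        using x by (intro prod.cong) auto
      then show ?thesis using prod_if_all[of Not x r] x by (simp only:)
    qed
    have p3: "(\<Prod>j<m. if y!j then r else 0) = (if \<forall>b\<in>set y. b then r ^ m else 0)"
      using prod_if_all[of "\<lambda>b. b" y r] y by (simp only:)
    have p4: "(\<Prod>j<n. if x!j then r else 0) = (if \<forall>b\<in>set x. b then r ^ n else 0)"
      using prod_if_all[of "\<lambda>b. b" x r] x by (simp only:)
    show ?thesis unfolding S hv p1 p2 p3 p4 ..
  qed
  also have "\<dots> = sem (ZS n m a) y x"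
  proof -
    define A1 where "A1 = (\<forall>b\<in>set y. \<not> b)"
    define A2 where "A2 = (\<forall>b\<in>set y. b)"
    define B1 where "B1 = (\<forall>b\<in>set x. \<not> b)"
    define B2 where "B2 = (\<forall>b\<in>set x. b)"
    have z: "sem (ZS n m a) y x = (if A1 \<and> B1 then 1 else 0) + (if A2 \<and> B2 then e else 0)"
      unfolding A1_def A2_def B1_def B2_def e_def by simp
    have c3: "c * (r ^ m * r ^ n) = 1" by (rule c1)
    have c4: "c * z * (r ^ m * r ^ n) = z" for z using c1 by (simp add: algebra_simps)
    show ?thesis unfolding z A1_def[symmetric] A2_def[symmetric] B1_def[symmetric] B2_def[symmetric]
      by (cases A1; cases A2; cases B1; cases B2) (simp_all add: c3 c4)
  qed
  finally show ?thesis .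
qed




lemma sum_bits_three: "(\<Sum>z\<in>bits 3. f z) = f [False,False,False] + f [False,False,True] + f [False,True,False] + f [False,True,True]
   + f [True,False,False] + f [True,False,True] + f [True,True,False] + f [True,True,True]"
  by (simp add: numeral_3_eq_3 sum_bits_Suc add.assoc)

lemma hh3: "complex_of_real ((1 / sqrt 2) ^ 3) * 2 = hh"
proof -
  have "(1 / sqrt 2) ^ 3 * 2 = (1 / sqrt (2::real))"
    by (simp add: power3_eq_cube field_simps)
  then show ?thesis unfolding hh_def by (metis of_real_mult of_real_numeral)
qed

lemma x21: "sem (XS 2 1 0) [o'] [p, q] = (if o' = (p \<noteq> q) then hh else 0)"
  using hh3 by (cases o'; cases p; cases q) (simp_all add: nones_def)

lemma x21': "sem (XS 2 (Suc 0) 0) [o'] [p, q] = (if o' = (p \<noteq> q) then hh else 0)"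
  using x21 by simp

definition cnA where "cnA = Comp (Tens Wire (XS 2 1 0)) (Tens (ZS 1 2 0) Wire)"
definition cnB where "cnB = Comp (Tens (XS 2 1 0) Wire) (Tens Wire (ZS 1 2 0))"

lemma cn_io: "wf cnA" "ins cnA = 2" "outs cnA = 2" "wf cnB" "ins cnB = 2" "outs cnB = 2"
  unfolding cnA_def cnB_def by simp_all

lemma cnA_sem: "sem cnA [c, d] [a, b] = (if c = a \<and> d = (a \<noteq> b) then hh else 0)"
  unfolding cnA_def
  by (cases a; cases b; cases c; cases d) (simp_all del: sem.simps(2) add: sum_bits_Suc sum_bits_three x21 x21')

lemma cnB_sem: "sem cnB [c, d] [a, b] = (if c = (a \<noteq> b) \<and> d = b then hh else 0)"
  unfolding cnB_def
  by (cases a; cases b; cases c; cases d) (simp_all del: sem.simps(2) add: sum_bits_Suc sum_bits_three x21 x21')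

definition sq2d where "sq2d = Comp (XS 1 0 0) (Comp Had (XS 0 1 0))"
lemma sq2d: "wf sq2d" "ins sq2d = 0" "outs sq2d = 0" "sem sq2d [] [] = complex_of_real (sqrt 2)"
proof -
  show "wf sq2d" "ins sq2d = 0" "outs sq2d = 0" unfolding sq2d_def by simp_all
  have "sem sq2d [] [] = complex_of_real (2 / sqrt 2)"
    unfolding sq2d_def by (simp add: sum_bits_1 nones_def field_simps s22')
  then show "sem sq2d [] [] = complex_of_real (sqrt 2)" by (simp add: real_div_sqrt)
qed

definition swapdec where "swapdec = Tens (Comp cnA (Comp cnB cnA)) (Tens (XS 0 0 0) sq2d)"

lemma swapdec_io: "wf swapdec" "ins swapdec = 2" "outs swapdec = 2"
  unfolding swapdec_def by (simp_all add: cn_io sq2d)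

lemma hh3b: "hh * (hh * (hh * (2 * complex_of_real (sqrt 2)))) = 1"
proof -
  have "hh * hh = 1/2" by (rule hhs)
  moreover have "hh * complex_of_real (sqrt 2) = 1" unfolding hh_def by (simp flip: of_real_mult)
  ultimately show ?thesis by (metis (no_types, lifting) mult.assoc mult.left_commute nonzero_eq_divide_eq
      mult_1_right zero_neq_numeral divide_self_if mult.commute times_divide_eq_left)
qed

lemma swapdec_sem: "sem swapdec [c, d] [a, b] = sem Swap [c, d] [a, b]"
proof -
  have "sem swapdec [c, d] [a, b] = sem (Comp cnA (Comp cnB cnA)) [c, d] [a, b] * (2 * complex_of_real (sqrt 2))"
    unfolding swapdec_def by (simp add: cn_io sq2d)
  also have "sem (Comp cnA (Comp cnB cnA)) [c, d] [a, b] = (if c = b \<and> d = a then hh * (hh * hh) else 0)"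
    by (cases a; cases b; cases c; cases d) (simp_all del: sem.simps(9) add: cn_io comp1 sum_bits_two cnA_sem cnB_sem sem.simps(9)[of cnA] sem.simps(9)[of cnB])
  finally show ?thesis using hh3b by (auto simp: mult.assoc)
qed




fun CC :: "(zx \<Rightarrow> zx) \<Rightarrow> zx \<Rightarrow> zx" where
  "CC b (Tens X1 X2) = Comp (TA (ins X1) (outs X1) (ins X2) (outs X2)) (Comp (Tens (Tens (CC b X1) (CC b X2)) (wires 0)) (ZS 1 2 0))"
| "CC b (Comp X3 X1) = Comp (SA (ins X1) (outs X1) (outs X3)) (Comp (Tens (Tens (CC b X1) (CC b X3)) (wires 0)) (ZS 1 2 0))"
| "CC b D = b D"

fun leaves_ok :: "(zx \<Rightarrow> bool) \<Rightarrow> zx \<Rightarrow> bool" where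
  "leaves_ok Q (Tens X1 X2) = (leaves_ok Q X1 \<and> leaves_ok Q X2)"
| "leaves_ok Q (Comp X1 X2) = (leaves_ok Q X1 \<and> leaves_ok Q X2)"
| "leaves_ok Q D = Q D"

lemma CC_P: "wf D \<Longrightarrow> leaves_ok (\<lambda>g. P g (b g)) D \<Longrightarrow> P D (CC b D)"
proof (induction D)
  case (Comp X3 X1)
  then have "P X1 (CC b X1)" "P X3 (CC b X3)" "outs X1 = ins X3" by auto
  then show ?case unfolding CC.simps by (rule P_Comp[OF _ _ _ refl])
next
  case (Tens X1 X2)
  then have "P X1 (CC b X1)" "P X2 (CC b X2)" by auto
  then show ?case unfolding CC.simps by (rule P_Tens[OF _ _ refl])
qed simp_all

lemma leaves_par: "Q Had \<Longrightarrow> Q Emp \<Longrightarrow> leaves_ok Q (par Had k)"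
  by (induction k) simp_all

definition base0 :: "zx \<Rightarrow> zx" where
  "base0 D = (case D of XS n m a \<Rightarrow> gX (n+m) a | Had \<Rightarrow> gH | Wire \<Rightarrow> gX 2 0 | Cup \<Rightarrow> gX 2 0 | Cap \<Rightarrow> gX 2 0
     | Emp \<Rightarrow> ZS 1 0 0 | _ \<Rightarrow> Emp)"

definition base1 :: "zx \<Rightarrow> zx" where
  "base1 D = (case D of ZS n m a \<Rightarrow> CC base0 (zdec n m a) | _ \<Rightarrow> base0 D)"

definition base2 :: "zx \<Rightarrow> zx" where
  "base2 D = (case D of Swap \<Rightarrow> CC base1 swapdec | _ \<Rightarrow> base1 D)"

lemma P_Emp': "P Emp (ZS (Suc 0) 0 0)" using P_Emp by simp

lemma P_ZS: "P (ZS n m a) (CC base0 (zdec n m a))"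
proof -
  have lo: "leaves_ok (\<lambda>g. P g (base0 g)) (zdec n m a)"
    unfolding zdec_def using P_Had P_Emp P_Emp' P_XS[of n m a]
    by (simp add: base0_def leaves_par)
  have "P (zdec n m a) (CC base0 (zdec n m a))" by (rule CC_P[OF zdec_io(1) lo])
  then show ?thesis by (rule P_cong) (simp_all add: zdec_io zdec_sem)
qed

lemma P_base1: "P (XS n m a) (base1 (XS n m a))" "P Had (base1 Had)" "P Wire (base1 Wire)"
  "P Cup (base1 Cup)" "P Cap (base1 Cap)" "P Emp (base1 Emp)" "P (ZS n m a) (base1 (ZS n m a))"
  by (simp_all add: base1_def base0_def P_XS P_Had P_Wire P_Cup P_Cap P_Emp P_Emp' P_ZS)

lemma P_Swap: "P Swap (CC base1 swapdec)"
proof -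
  have lo: "leaves_ok (\<lambda>g. P g (base1 g)) swapdec"
    unfolding swapdec_def cnA_def cnB_def sq2d_def using P_base1 by simp
  have "P swapdec (CC base1 swapdec)" by (rule CC_P[OF swapdec_io(1) lo])
  then show ?thesis
  proof (rule P_cong)
    fix x y :: "bool list" assume "length x = ins swapdec" "length y = outs swapdec"
    then obtain a b c d where "x = [a, b]" "y = [c, d]"
      by (auto simp: swapdec_io length_Suc_conv numeral_2_eq_2)
    then show "sem Swap y x = sem swapdec y x" using swapdec_sem by simp
  qed (simp_all add: swapdec_io)
qed

lemma P_base2: "leaves_ok (\<lambda>g. P g (base2 g)) D"
  by (induction D) (simp_all add: base2_def P_Swap P_base1[unfolded base1_def base0_def, simplified] base1_def base0_def P_ZS)

definition C where "C = CC base2"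

theorem lemma3p1:
  shows "\<exists>(C :: zx \<Rightarrow> zx) (lam :: nat \<Rightarrow> nat \<Rightarrow> complex).
    (\<forall>n m. lam n m \<noteq> 0) \<and>
    (\<forall>D. wf D \<longrightarrow>
       wf (C D) \<and> ins (C D) = 1 \<and> outs (C D) = ins D + outs D \<and>
       controlled_state (C D) \<and>
       (\<forall>x y. length x = ins D \<longrightarrow> length y = outs D \<longrightarrow>
          sem (C D) (x @ y) [True] = lam (ins D) (outs D) * sem D y x)) \<and>
    (\<exists>(TA :: nat \<Rightarrow> nat \<Rightarrow> nat \<Rightarrow> nat \<Rightarrow> zx) (TB :: nat \<Rightarrow> nat \<Rightarrow> nat \<Rightarrow> nat \<Rightarrow> zx)
       (TR :: nat \<Rightarrow> nat \<Rightarrow> nat \<Rightarrow> nat \<Rightarrow> nat).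
       \<forall>D1 D2. wf D1 \<longrightarrow> wf D2 \<longrightarrow>
         C (Tens D1 D2) =
           Comp (TA (ins D1) (outs D1) (ins D2) (outs D2))
             (Comp (Tens (Tens (C D1) (C D2)) (wires (TR (ins D1) (outs D1) (ins D2) (outs D2))))
                   (TB (ins D1) (outs D1) (ins D2) (outs D2)))) \<and>
    (\<exists>(SA :: nat \<Rightarrow> nat \<Rightarrow> nat \<Rightarrow> zx) (SB :: nat \<Rightarrow> nat \<Rightarrow> nat \<Rightarrow> zx)
       (SR :: nat \<Rightarrow> nat \<Rightarrow> nat \<Rightarrow> nat).
       \<forall>D1 D3. wf D1 \<longrightarrow> wf D3 \<longrightarrow> outs D1 = ins D3 \<longrightarrow>
         C (Comp D3 D1) =
           Comp (SA (ins D1) (outs D1) (outs D3))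
             (Comp (Tens (Tens (C D1) (C D3)) (wires (SR (ins D1) (outs D1) (outs D3))))
                   (SB (ins D1) (outs D1) (outs D3))))"
proof (intro exI conjI allI impI)
  show "lam n m \<noteq> 0" for n m by (simp add: lam_def)
  fix D assume D: "wf D"
  have PD: "P D (C D)" unfolding C_def by (rule CC_P[OF D P_base2])
  then show "wf (C D)" "ins (C D) = 1" "outs (C D) = ins D + outs D" unfolding P_def by auto
  show "controlled_state (C D)" using PD unfolding P_def controlled_state_def by auto
  fix x y :: "bool list" assume "length x = ins D" "length y = outs D"
  then show "sem (C D) (x @ y) [True] = lam (ins D) (outs D) * sem D y x" using PD unfolding P_def by auto
next
  fix X1 X2 :: zx
  show "C (Tens X1 X2) = Comp (TA (ins X1) (outs X1) (ins X2) (outs X2))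
             (Comp (Tens (Tens (C X1) (C X2)) (wires ((\<lambda>_ _ _ _. 0) (ins X1) (outs X1) (ins X2) (outs X2))))
                   ((\<lambda>_ _ _ _. ZS 1 2 0) (ins X1) (outs X1) (ins X2) (outs X2)))"
    unfolding C_def by simp
next
  fix X1 X3 :: zx
  show "C (Comp X3 X1) = Comp (SA (ins X1) (outs X1) (outs X3))
             (Comp (Tens (Tens (C X1) (C X3)) (wires ((\<lambda>_ _ _. 0) (ins X1) (outs X1) (outs X3))))
                   ((\<lambda>_ _ _. ZS 1 2 0) (ins X1) (outs X1) (outs X3)))"
    unfolding C_def by simp
qed


end
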